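(* For every $k$ with $t\le k\le n$, the probability that the reverse reachable set of $B$ has exactly $k$ vertices equals $\alpha_k$, and \[ \alpha_k \le n^x \cdot \max_{\substack{\sum_i k_i = k,\ t_i\le k_i\le a_i}} a_{k_1,\dots,k_x}. \]
   Context: Random graph model: $V$ is a set of $n$ vertices, $B\subseteq V$ a target set with $|B|=t$, each $v\in V$ has a prescribed out-degree $d_v$ with $1\le d_{\min}\le d_v\le d_{\max}$ (constants), and for each $v$ independently its out-neighbour set is chosen uniformly among all $d_v$-element subsets of $V$. Let $d_1,\dots,d_x$ be the distinct out-degrees, $a_i$ the number of vertices of out-degree $d_i$, $t_i$ the number of vertices of $B$ of out-degree $d_i$. The reverse reachable set of $B$ is the set of vertices having a directed path to a vertex of $B$. For $S\supseteq B$ containing $k_i$ vertices of out-degree $d_i$, $R(k_1,\dots,k_x)$ is the probability that every vertex of $S$ has a directed path to $B$ inside $S$. For $k=\sum_i k_i$ with $t_i\le k_i\le a_i$, define $a_{k_1,\dots,k_x}=\left(\prod_{i=1}^x\binom{a_i-t_i}{k_i-t_i}\left(\binom{n-k}{d_i}/\binom{n}{d_i}\right)^{a_i-k_i}\right)R(k_1,\dots,k_x)$, where the factor $(\binom{n-k}{d_i}/\binom{n}{d_i})^{a_i-k_i}$ is taken to be $1$ when $a_i=k_i$, and $\alpha_k=\sum_{\sum_i k_i=k,\ t_i\le k_i\le a_i} a_{k_1,\dots,k_x}$. *)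

theory Defs
  imports "HOL-Probability.Probability"
begin

text \<open>An outcome is a function G assigning to each vertex its out-neighbour set
  (vertices outside V get the empty set).\<close>

definition graph_pmf :: "'a set \<Rightarrow> ('a \<Rightarrow> nat) \<Rightarrow> ('a \<Rightarrow> 'a set) pmf" where
  "graph_pmf V d = Pi_pmf V {} (\<lambda>v. pmf_of_set {N. N \<subseteq> V \<and> card N = d v})"

definition edges_in :: "('a \<Rightarrow> 'a set) \<Rightarrow> 'a set \<Rightarrow> ('a \<times> 'a) set" where
  "edges_in G S = {(u, w). u \<in> S \<and> w \<in> S \<and> w \<in> G u}"

definition rev_reach :: "('a \<Rightarrow> 'a set) \<Rightarrow> 'a set \<Rightarrow> 'a set \<Rightarrow> 'a set" where
  "rev_reach G V B = {v \<in> V. \<exists>b\<in>B. (v, b) \<in> (edges_in G V)\<^sup>*}"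

definition reaches_inside :: "('a \<Rightarrow> 'a set) \<Rightarrow> 'a set \<Rightarrow> 'a set \<Rightarrow> bool" where
  "reaches_inside G S B = (\<forall>v\<in>S. \<exists>b\<in>B. (v, b) \<in> (edges_in G S)\<^sup>*)"

text \<open>The distinct out-degrees are the elements of d ` V; a tuple (k_1,...,k_x)
  is represented by a function kk from degrees to counts.
  cnt_deg A d j = number of vertices of A with out-degree j
  (so a_i = cnt_deg V d d_i and t_i = cnt_deg B d d_i).\<close>
definition cnt_deg :: "'a set \<Rightarrow> ('a \<Rightarrow> nat) \<Rightarrow> nat \<Rightarrow> nat" where
  "cnt_deg A d j = card {v \<in> A. d v = j}"

definition R_prob :: "'a set \<Rightarrow> ('a \<Rightarrow> nat) \<Rightarrow> 'a set \<Rightarrow> (nat \<Rightarrow> nat) \<Rightarrow> real" where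
  "R_prob V d B kk =
    (let S = (SOME S. B \<subseteq> S \<and> S \<subseteq> V \<and> (\<forall>j\<in>d ` V. cnt_deg S d j = kk j))
     in measure_pmf.prob (graph_pmf V d) {G. reaches_inside G S B})"

definition a_coef :: "'a set \<Rightarrow> ('a \<Rightarrow> nat) \<Rightarrow> 'a set \<Rightarrow> (nat \<Rightarrow> nat) \<Rightarrow> real" where
  "a_coef V d B kk =
    (let n = card V; k = sum kk (d ` V) in
     (\<Prod>j\<in>d ` V. real ((cnt_deg V d j - cnt_deg B d j) choose (kk j - cnt_deg B d j))
        * (if cnt_deg V d j = kk j then 1
           else (real ((n - k) choose j) / real (n choose j)) ^ (cnt_deg V d j - kk j)))
     * R_prob V d B kk)"

definition tuples :: "'a set \<Rightarrow> ('a \<Rightarrow> nat) \<Rightarrow> 'a set \<Rightarrow> nat \<Rightarrow> (nat \<Rightarrow> nat) set" where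
  "tuples V d B k = {kk. (\<forall>j\<in>d ` V. cnt_deg B d j \<le> kk j \<and> kk j \<le> cnt_deg V d j)
      \<and> (\<forall>j. j \<notin> d ` V \<longrightarrow> kk j = 0) \<and> sum kk (d ` V) = k}"

definition alpha :: "'a set \<Rightarrow> ('a \<Rightarrow> nat) \<Rightarrow> 'a set \<Rightarrow> nat \<Rightarrow> real" where
  "alpha V d B k = (\<Sum>kk\<in>tuples V d B k. a_coef V d B kk)"

end

theory Submission
  imports Defs
begin

lemma edges_in_mono: "S \<subseteq> T \<Longrightarrow> edges_in G S \<subseteq> edges_in G T"
  unfolding edges_in_def by auto

lemma path_inside:
  assumes "(v, b) \<in> (edges_in G V)\<^sup>*" "b \<in> B"
    and "\<And>u. u \<in> V \<Longrightarrow> (\<exists>b\<in>B. (u, b) \<in> (edges_in G V)\<^sup>*) \<Longrightarrow> u \<in> S"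
    and "b \<in> S"
  shows "(v, b) \<in> (edges_in G S)\<^sup>*"
  using assms(1)
proof (induction rule: converse_rtrancl_induct)
  case base
  then show ?case by simp
next
  case (step u w)
  have uw: "u \<in> V" "w \<in> V" "w \<in> G u" using step.hyps(1) by (auto simp: edges_in_def)
  have "w \<in> S" using assms(3)[OF uw(2)] step.hyps(2) assms(2) by blast
  moreover have "u \<in> S"
    using assms(3)[OF uw(1)] assms(2) step.hyps by (meson converse_rtrancl_into_rtrancl)
  ultimately have "(u, w) \<in> edges_in G S" using uw by (auto simp: edges_in_def)
  then show ?case using step.IH by (meson converse_rtrancl_into_rtrancl)
qed

lemma rev_reach_char:
  assumes sup: "\<And>v. v \<in> V \<Longrightarrow> G v \<subseteq> V" and BS: "B \<subseteq> S" and SV: "S \<subseteq> V"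
  shows "rev_reach G V B = S \<longleftrightarrow> reaches_inside G S B \<and> (\<forall>w\<in>V-S. G w \<inter> S = {})"
proof
  assume eq: "rev_reach G V B = S"
  have mem: "u \<in> S" if "u \<in> V" "\<exists>b\<in>B. (u, b) \<in> (edges_in G V)\<^sup>*" for u
    using that eq unfolding rev_reach_def by blast
  have "reaches_inside G S B"
    unfolding reaches_inside_def
  proof
    fix v assume "v \<in> S"
    then obtain b where b: "b \<in> B" "(v, b) \<in> (edges_in G V)\<^sup>*" using eq unfolding rev_reach_def by blast
    show "\<exists>b\<in>B. (v, b) \<in> (edges_in G S)\<^sup>*"
      using path_inside[OF b(2) b(1) mem] b BS by blast
  qed
  moreover have "\<forall>w\<in>V-S. G w \<inter> S = {}"
  proof (intro ballI equals0I)
    fix w u assume w: "w \<in> V - S" and u: "u \<in> G w \<inter> S"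
    then obtain b where b: "b \<in> B" "(u, b) \<in> (edges_in G V)\<^sup>*" using eq unfolding rev_reach_def by blast
    have "(w, u) \<in> edges_in G V" using w u sup[of w] by (auto simp: edges_in_def)
    then have "(w, b) \<in> (edges_in G V)\<^sup>*" using b by (meson converse_rtrancl_into_rtrancl)
    then have "w \<in> S" using mem w b by blast
    then show False using w by blast
  qed
  ultimately show "reaches_inside G S B \<and> (\<forall>w\<in>V-S. G w \<inter> S = {})" ..
next
  assume h: "reaches_inside G S B \<and> (\<forall>w\<in>V-S. G w \<inter> S = {})"
  show "rev_reach G V B = S"
  proof
    show "S \<subseteq> rev_reach G V B"
    proof
      fix v assume "v \<in> S"
      then obtain b where "b \<in> B" "(v, b) \<in> (edges_in G S)\<^sup>*" using h unfolding reaches_inside_def by blast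
      moreover have "(edges_in G S)\<^sup>* \<subseteq> (edges_in G V)\<^sup>*" by (rule rtrancl_mono[OF edges_in_mono[OF SV]])
      ultimately show "v \<in> rev_reach G V B" using \<open>v \<in> S\<close> SV unfolding rev_reach_def by blast
    qed
  next
    show "rev_reach G V B \<subseteq> S"
    proof
      fix v assume "v \<in> rev_reach G V B"
      then obtain b where b: "b \<in> B" "(v, b) \<in> (edges_in G V)\<^sup>*" unfolding rev_reach_def by blast
      from b(2) show "v \<in> S"
      proof (induction rule: converse_rtrancl_induct)
        case base then show ?case using b(1) BS by blast
      next
        case (step u w)
        then show ?case using h by (auto simp: edges_in_def)
      qed
    qed
  qed
qed

lemma nbr_set_ne:
  assumes "finite V" "j \<le> card V"
  shows "finite {N. N \<subseteq> V \<and> card N = j}" "{N. N \<subseteq> V \<and> card N = j} \<noteq> {}"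
proof -
  show "finite {N. N \<subseteq> V \<and> card N = j}" by (rule finite_subset[of _ "Pow V"]) (auto simp: assms(1))
  obtain N where "N \<subseteq> V" "card N = j" using obtain_subset_with_card_n[OF assms(2)] by blast
  then show "{N. N \<subseteq> V \<and> card N = j} \<noteq> {}" by blast
qed

lemma graph_support:
  assumes "finite V" "\<forall>v\<in>V. d v \<le> card V" "G \<in> set_pmf (graph_pmf V d)"
  shows "\<And>v. v \<notin> V \<Longrightarrow> G v = {}" "\<And>v. v \<in> V \<Longrightarrow> G v \<subseteq> V \<and> card (G v) = d v"
proof -
  have G: "G \<in> PiE_dflt V {} (set_pmf \<circ> (\<lambda>v. pmf_of_set {N. N \<subseteq> V \<and> card N = d v}))"
    using assms(3) unfolding graph_pmf_def set_Pi_pmf[OF assms(1)] by assumption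
  show "\<And>v. v \<notin> V \<Longrightarrow> G v = {}" using G by (auto simp: PiE_dflt_def)
  fix v assume v: "v \<in> V"
  then have "G v \<in> set_pmf (pmf_of_set {N. N \<subseteq> V \<and> card N = d v})" using G by (auto simp: PiE_dflt_def)
  then show "G v \<subseteq> V \<and> card (G v) = d v"
    using nbr_set_ne[OF assms(1), of "d v"] assms(2) v by (subst (asm) set_pmf_of_set) auto
qed

lemma prob_product_pair:
  "measure_pmf.prob (pair_pmf M N) (A \<times> B) = measure_pmf.prob M A * measure_pmf.prob N B"
proof -
  have "measure_pmf.prob (pair_pmf M N) (A \<times> B) = measure_pmf.prob (pair_pmf M N) ((A \<inter> set_pmf M) \<times> (B \<inter> set_pmf N))"
    by (subst (1 2) measure_Int_set_pmf[symmetric]) (simp add: Times_Int_Times)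
  also have "\<dots> = measure_pmf.prob M (A \<inter> set_pmf M) * measure_pmf.prob N (B \<inter> set_pmf N)"
    by (rule measure_pmf_prob_product) (auto intro: countable_subset)
  also have "\<dots> = measure_pmf.prob M A * measure_pmf.prob N B" by (simp add: measure_Int_set_pmf)
  finally show ?thesis .
qed

lemma edges_in_cong: "(\<And>u. u \<in> S \<Longrightarrow> G u = H u) \<Longrightarrow> edges_in G S = edges_in H S"
  unfolding edges_in_def by auto

lemma reaches_inside_cong: "(\<And>u. u \<in> S \<Longrightarrow> G u = H u) \<Longrightarrow> reaches_inside G S B = reaches_inside H S B"
  unfolding reaches_inside_def using edges_in_cong[of S G H] by simp

lemma factor:
  assumes fin: "finite V" and deg: "\<forall>v\<in>V. d v \<le> card V" and SV: "S \<subseteq> V"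
  shows "measure_pmf.prob (graph_pmf V d) {G. reaches_inside G S B \<and> (\<forall>w\<in>V-S. G w \<inter> S = {})}
     = measure_pmf.prob (graph_pmf V d) {G. reaches_inside G S B}
       * (\<Prod>w\<in>V-S. real (card (V - S) choose d w) / real (card V choose d w))"
proof -
  define p where "p = (\<lambda>v. pmf_of_set {N. N \<subseteq> V \<and> card N = d v})"
  have fS: "finite S" "finite (V - S)" using fin SV finite_subset by auto
  define h where "h = (\<lambda>(f::'a \<Rightarrow> 'a set, g::'a \<Rightarrow> 'a set) x. if x \<in> S then f x else g x)"
  have VV: "V = S \<union> (V - S)" using SV by blast
  have gp: "graph_pmf V d = map_pmf h (pair_pmf (Pi_pmf S {} p) (Pi_pmf (V - S) {} p))"
    unfolding graph_pmf_def p_def[symmetric] h_def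
    by (subst VV, rule Pi_pmf_union) (use fS in auto)
  have sub: "Pi_pmf S {} p = map_pmf (\<lambda>f x. if x \<in> S then f x else {}) (graph_pmf V d)"
    unfolding graph_pmf_def p_def[symmetric] by (rule Pi_pmf_subset[OF fin SV])
  have pre: "h -` {G. reaches_inside G S B \<and> (\<forall>w\<in>V-S. G w \<inter> S = {})}
     = {f. reaches_inside f S B} \<times> Pi (V - S) (\<lambda>_. {N. N \<inter> S = {}})"
  proof (rule set_eqI)
    fix x :: "('a \<Rightarrow> 'a set) \<times> ('a \<Rightarrow> 'a set)"
    obtain f g where x: "x = (f, g)" by (cases x)
    have "reaches_inside (h (f, g)) S B = reaches_inside f S B"
      by (rule reaches_inside_cong) (simp add: h_def)
    moreover have "(\<forall>w\<in>V-S. h (f, g) w \<inter> S = {}) = (g \<in> Pi (V - S) (\<lambda>_. {N. N \<inter> S = {}}))"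
      by (auto simp: h_def Pi_def)
    ultimately show "x \<in> h -` {G. reaches_inside G S B \<and> (\<forall>w\<in>V-S. G w \<inter> S = {})} \<longleftrightarrow>
       x \<in> {f. reaches_inside f S B} \<times> Pi (V - S) (\<lambda>_. {N. N \<inter> S = {}})"
      by (simp add: x)
  qed
  have "measure_pmf.prob (graph_pmf V d) {G. reaches_inside G S B \<and> (\<forall>w\<in>V-S. G w \<inter> S = {})}
     = measure_pmf.prob (Pi_pmf S {} p) {f. reaches_inside f S B}
       * measure_pmf.prob (Pi_pmf (V - S) {} p) (Pi (V - S) (\<lambda>_. {N. N \<inter> S = {}}))"
    unfolding gp measure_map_pmf pre by (rule prob_product_pair)
  also have "measure_pmf.prob (Pi_pmf S {} p) {f. reaches_inside f S B}
      = measure_pmf.prob (graph_pmf V d) {G. reaches_inside G S B}"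
    unfolding sub measure_map_pmf
  proof (rule arg_cong[where f="measure_pmf.prob _"], rule set_eqI)
    fix f :: "'a \<Rightarrow> 'a set"
    have "reaches_inside (\<lambda>x. if x \<in> S then f x else {}) S B = reaches_inside f S B"
      by (rule reaches_inside_cong) simp
    then show "f \<in> (\<lambda>f x. if x \<in> S then f x else {}) -` {f. reaches_inside f S B} \<longleftrightarrow> f \<in> {G. reaches_inside G S B}"
      by simp
  qed
  also have "measure_pmf.prob (Pi_pmf (V - S) {} p) (Pi (V - S) (\<lambda>_. {N. N \<inter> S = {}}))
      = (\<Prod>w\<in>V-S. measure_pmf.prob (p w) {N. N \<inter> S = {}})"
    by (rule measure_Pi_pmf_Pi[OF fS(2)])
  also have "\<dots> = (\<Prod>w\<in>V-S. real (card (V - S) choose d w) / real (card V choose d w))"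
  proof (rule prod.cong[OF refl])
    fix w assume w: "w \<in> V - S"
    have ne: "finite {N. N \<subseteq> V \<and> card N = d w}" "{N. N \<subseteq> V \<and> card N = d w} \<noteq> {}"
      using nbr_set_ne[OF fin, of "d w"] deg w by auto
    have "{N. N \<subseteq> V \<and> card N = d w} \<inter> {N. N \<inter> S = {}} = {N. N \<subseteq> V - S \<and> card N = d w}" by auto
    then show "measure_pmf.prob (p w) {N. N \<inter> S = {}} = real (card (V - S) choose d w) / real (card V choose d w)"
      unfolding p_def using ne by (simp add: measure_pmf_of_set n_subsets fin fS)
  qed
  finally show ?thesis .
qed

lemma rtrancl_transfer:
  assumes "\<And>x y. (x, y) \<in> R \<Longrightarrow> (f x, f y) \<in> Q"
  shows "(x, y) \<in> R\<^sup>* \<Longrightarrow> (f x, f y) \<in> Q\<^sup>*"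
proof (induction rule: rtrancl_induct)
  case base then show ?case by simp
next
  case (step y z) then show ?case using assms by (meson rtrancl.rtrancl_into_rtrancl)
qed

lemma graph_pmf_perm:
  assumes fin: "finite V" and bij: "bij \<pi>" and pV: "\<And>x. \<pi> x \<in> V \<longleftrightarrow> x \<in> V"
    and pd: "\<And>x. x \<in> V \<Longrightarrow> d (\<pi> x) = d x" and deg: "\<forall>v\<in>V. d v \<le> card V"
  shows "map_pmf (\<lambda>G v. \<pi> ` G (inv \<pi> v)) (graph_pmf V d) = graph_pmf V d"
proof (rule pmf_eqI)
  define \<sigma> where "\<sigma> = inv \<pi>"
  have ps: "\<pi> (\<sigma> x) = x" for x unfolding \<sigma>_def using bij by (meson bij_inv_eq_iff)
  have sp: "\<sigma> (\<pi> x) = x" for x unfolding \<sigma>_def using bij by (simp add: bij_is_inj)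
  have injp: "inj \<pi>" using bij bij_is_inj by blast
  have sV: "\<sigma> x \<in> V \<longleftrightarrow> x \<in> V" for x using pV[of "\<sigma> x"] ps by simp
  define \<phi> where "\<phi> = (\<lambda>G v. \<pi> ` G (\<sigma> v))"
  define \<psi> where "\<psi> = (\<lambda>(G::'a \<Rightarrow> 'a set) v. \<sigma> ` G (\<pi> v))"
  have phipsi: "\<phi> (\<psi> G) = G" for G
    unfolding \<phi>_def \<psi>_def by (rule ext) (simp add: image_image ps)
  have injphi: "inj \<phi>"
  proof (rule injI)
    fix G H assume "\<phi> G = \<phi> H"
    then have "\<pi> ` G (\<sigma> v) = \<pi> ` H (\<sigma> v)" for v unfolding \<phi>_def by meson
    then have "G (\<sigma> v) = H (\<sigma> v)" for v using injp by (meson inj_image_eq_iff)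
    then show "G = H" by (metis sp ext)
  qed
  fix G
  define p where "p = (\<lambda>v. pmf_of_set {N. N \<subseteq> V \<and> card N = d v})"
  have ne: "finite {N. N \<subseteq> V \<and> card N = j}" for j
    by (rule finite_subset[of _ "Pow V"]) (auto simp: fin)
  have pimg: "pmf (p (\<pi> y)) (\<pi> ` N) = pmf (p y) N" if y: "y \<in> V" for y N
  proof -
    have "\<pi> ` N \<subseteq> V \<longleftrightarrow> N \<subseteq> V" using pV by auto
    moreover have "card (\<pi> ` N) = card N" using injp by (simp add: card_image inj_on_subset)
    ultimately have "(\<pi> ` N \<in> {N. N \<subseteq> V \<and> card N = d (\<pi> y)}) = (N \<in> {N. N \<subseteq> V \<and> card N = d y})"
      using pd[OF y] by simp
    moreover have "{N. N \<subseteq> V \<and> card N = d y} \<noteq> {}"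
      using obtain_subset_with_card_n[of "d y" V] deg y by blast
    ultimately show ?thesis unfolding p_def using pd[OF y] ne[of "d y"] by (simp add: indicator_def)
  qed
  have "pmf (map_pmf (\<lambda>G v. \<pi> ` G (inv \<pi> v)) (graph_pmf V d)) G = pmf (map_pmf \<phi> (graph_pmf V d)) (\<phi> (\<psi> G))"
    unfolding phipsi by (simp add: \<phi>_def \<sigma>_def)
  also have "\<dots> = pmf (graph_pmf V d) (\<psi> G)" by (rule pmf_map_inj'[OF injphi])
  also have "\<dots> = pmf (graph_pmf V d) G"
  proof -
    have out: "(\<forall>x. x \<notin> V \<longrightarrow> \<psi> G x = {}) \<longleftrightarrow> (\<forall>x. x \<notin> V \<longrightarrow> G x = {})"
    proof
      assume h: "\<forall>x. x \<notin> V \<longrightarrow> \<psi> G x = {}"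
      show "\<forall>x. x \<notin> V \<longrightarrow> G x = {}"
      proof (intro allI impI)
        fix x assume "x \<notin> V"
        then have "\<sigma> x \<notin> V" using sV by blast
        then show "G x = {}" using h[rule_format, of "\<sigma> x"] unfolding \<psi>_def by (simp add: ps)
      qed
    next
      assume h: "\<forall>x. x \<notin> V \<longrightarrow> G x = {}"
      show "\<forall>x. x \<notin> V \<longrightarrow> \<psi> G x = {}"
        unfolding \<psi>_def using h pV by simp
    qed
    have "(\<Prod>x\<in>V. pmf (p x) (\<psi> G x)) = (\<Prod>x\<in>V. pmf (p (\<pi> x)) (\<pi> ` \<psi> G x))"
      by (rule prod.cong[OF refl]) (simp add: pimg)
    also have "\<dots> = (\<Prod>x\<in>V. pmf (p (\<pi> x)) (G (\<pi> x)))"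
      unfolding \<psi>_def by (simp add: image_image ps)
    also have "\<dots> = (\<Prod>x\<in>V. pmf (p x) (G x))"
    proof -
      have "inj_on \<pi> V" using injp by (rule inj_on_subset) simp
      moreover have "\<pi> ` V = V"
      proof
        show "\<pi> ` V \<subseteq> V" using pV by auto
        show "V \<subseteq> \<pi> ` V"
        proof
          fix x assume "x \<in> V"
          then show "x \<in> \<pi> ` V" using sV ps by (metis image_eqI)
        qed
      qed
      ultimately have "bij_betw \<pi> V V" by (simp add: bij_betw_def)
      then show ?thesis by (rule prod.reindex_bij_betw)
    qed
    finally show ?thesis unfolding graph_pmf_def p_def[symmetric] pmf_Pi[OF fin] using out by auto
  qed
  finally show "pmf (map_pmf (\<lambda>G v. \<pi> ` G (inv \<pi> v)) (graph_pmf V d)) G = pmf (graph_pmf V d) G" .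
qed

lemma perm_exists:
  assumes "finite X"
  shows "finite Y \<Longrightarrow> (\<forall>j. card {x\<in>X. d x = j} = card {y\<in>Y. d y = j})
     \<Longrightarrow> \<exists>f. bij_betw f X Y \<and> (\<forall>x\<in>X. d (f x) = d x)"
  using assms
proof (induction X arbitrary: Y rule: finite_induct)
  case empty
  have "Y = {}"
  proof (rule ccontr)
    assume "Y \<noteq> {}"
    then obtain y where y: "y \<in> Y" by blast
    have "card {z\<in>Y. d z = d y} > 0" using y empty.prems(1) by (subst card_gt_0_iff) auto
    then show False using empty.prems(2) by simp
  qed
  then show ?case by (auto simp: bij_betw_def)
next
  case (insert x X)
  have "card {y\<in>Y. d y = d x} = card {z\<in>insert x X. d z = d x}" using insert.prems(2) by simp
  also have "\<dots> > 0" using insert.hyps by (subst card_gt_0_iff) auto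
  finally obtain y where y: "y \<in> Y" "d y = d x"
    by (metis (mono_tags, lifting) card.empty empty_Collect_eq less_irrefl mem_Collect_eq)
  have cnt: "card {z\<in>X. d z = j} = card {z\<in>Y - {y}. d z = j}" for j
  proof -
    have fx: "finite {z\<in>X. d z = j}" using insert.hyps by simp
    have fy: "finite {z\<in>Y. d z = j}" using insert.prems by simp
    have a: "card {z\<in>insert x X. d z = j} = card {z\<in>X. d z = j} + (if d x = j then 1 else 0)"
    proof (cases "d x = j")
      case True
      then have "{z\<in>insert x X. d z = j} = insert x {z\<in>X. d z = j}" by auto
      then show ?thesis using True fx insert.hyps by simp
    next
      case False
      then have "{z\<in>insert x X. d z = j} = {z\<in>X. d z = j}" by auto
      then show ?thesis using False by simp
    qed
    have b: "card {z\<in>Y. d z = j} = card {z\<in>Y - {y}. d z = j} + (if d x = j then 1 else 0)"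
    proof (cases "d x = j")
      case True
      then have "{z\<in>Y. d z = j} = insert y {z\<in>Y - {y}. d z = j}" using y by auto
      then show ?thesis using True fy by (simp add: finite_subset)
    next
      case False
      then have "{z\<in>Y. d z = j} = {z\<in>Y - {y}. d z = j}" using y by auto
      then show ?thesis using False by simp
    qed
    show ?thesis using a b insert.prems(2) by simp
  qed
  obtain f where f: "bij_betw f X (Y - {y})" "\<forall>z\<in>X. d (f z) = d z"
    using insert.IH[of "Y - {y}"] insert.prems cnt by auto
  define g where "g = f(x := y)"
  have "bij_betw g X (Y - {y})" using f(1) insert.hyps(2) by (subst bij_betw_cong[of X g f]) (auto simp: g_def)
  then have "bij_betw g (X \<union> {x}) ((Y - {y}) \<union> {g x})"
    using insert.hyps(2) by (intro notIn_Un_bij_betw) (auto simp: g_def)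
  moreover have "X \<union> {x} = insert x X" "(Y - {y}) \<union> {g x} = Y" using y by (auto simp: g_def)
  ultimately have "bij_betw g (insert x X) Y" by simp
  moreover have "\<forall>z\<in>insert x X. d (g z) = d z" using f(2) y insert.hyps(2) by (auto simp: g_def)
  ultimately show ?case by blast
qed


lemma cnt_all:
  assumes "S \<subseteq> V" "S' \<subseteq> V" "\<forall>j\<in>d ` V. cnt_deg S d j = cnt_deg S' d j"
  shows "card {x\<in>S. d x = j} = card {x\<in>S'. d x = j}"
proof (cases "j \<in> d ` V")
  case True then show ?thesis using assms(3) unfolding cnt_deg_def by blast
next
  case False
  then have "{x\<in>S. d x = j} = {}" "{x\<in>S'. d x = j} = {}" using assms(1,2) by auto
  then show ?thesis by (metis card.empty)
qed

lemma R_sym: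
  assumes fin: "finite V" and deg: "\<forall>v\<in>V. d v \<le> card V"
    and BS: "B \<subseteq> S" "S \<subseteq> V" and BS': "B \<subseteq> S'" "S' \<subseteq> V"
    and cnt: "\<forall>j. card {x\<in>S. d x = j} = card {x\<in>S'. d x = j}"
  shows "measure_pmf.prob (graph_pmf V d) {G. reaches_inside G S' B}
       = measure_pmf.prob (graph_pmf V d) {G. reaches_inside G S B}"
proof -
  have fS: "finite S" "finite S'" using fin BS(2) BS'(2) by (auto intro: finite_subset)
  have cB: "card {x\<in>S'-B. d x = j} = card {x\<in>S-B. d x = j}" for j
  proof -
    have fB: "finite {x\<in>B. d x = j}" by (rule finite_subset[of _ S]) (use BS(1) fS in auto)
    have "{x\<in>S'-B. d x = j} = {x\<in>S'. d x = j} - {x\<in>B. d x = j}" "{x\<in>S-B. d x = j} = {x\<in>S. d x = j} - {x\<in>B. d x = j}" by auto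
    moreover have "{x\<in>B. d x = j} \<subseteq> {x\<in>S'. d x = j}" "{x\<in>B. d x = j} \<subseteq> {x\<in>S. d x = j}" using BS BS' by auto
    ultimately show ?thesis using cnt[rule_format, of j] fB by (simp add: card_Diff_subset)
  qed
  have cV: "card {x\<in>V-S'. d x = j} = card {x\<in>V-S. d x = j}" for j
  proof -
    have "{x\<in>V-S'. d x = j} = {x\<in>V. d x = j} - {x\<in>S'. d x = j}" "{x\<in>V-S. d x = j} = {x\<in>V. d x = j} - {x\<in>S. d x = j}" by auto
    moreover have "{x\<in>S'. d x = j} \<subseteq> {x\<in>V. d x = j}" "{x\<in>S. d x = j} \<subseteq> {x\<in>V. d x = j}" using BS BS' by auto
    moreover have "finite {x\<in>S. d x = j}" "finite {x\<in>S'. d x = j}" using fS by auto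
    ultimately show ?thesis using cnt[rule_format, of j] by (simp add: card_Diff_subset)
  qed
  obtain f1 where f1: "bij_betw f1 (S'-B) (S-B)" "\<forall>x\<in>S'-B. d (f1 x) = d x"
    using perm_exists[of "S'-B" "S-B" d] fS cB by auto
  obtain f2 where f2: "bij_betw f2 (V-S') (V-S)" "\<forall>x\<in>V-S'. d (f2 x) = d x"
    using perm_exists[of "V-S'" "V-S" d] fin cV by auto
  define h1 where "h1 = (\<lambda>x. if x \<in> B then x else f1 x)"
  have "bij_betw h1 (B \<union> (S'-B)) (B \<union> (S-B))"
    unfolding h1_def by (rule bij_betw_disjoint_Un[of "\<lambda>x. x"]) (use f1 in \<open>auto simp: bij_betw_def\<close>)
  moreover have "B \<union> (S'-B) = S'" "B \<union> (S-B) = S" using BS BS' by auto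
  ultimately have h1: "bij_betw h1 S' S" by simp
  define h2 where "h2 = (\<lambda>x. if x \<in> S' then h1 x else f2 x)"
  have "bij_betw h2 (S' \<union> (V-S')) (S \<union> (V-S))"
    unfolding h2_def by (rule bij_betw_disjoint_Un) (use f2 h1 in auto)
  moreover have "S' \<union> (V-S') = V" "S \<union> (V-S) = V" using BS BS' by auto
  ultimately have h2: "bij_betw h2 V V" by simp
  define \<pi> where "\<pi> = (\<lambda>x. if x \<in> V then h2 x else x)"
  have "bij_betw \<pi> (V \<union> (-V)) (V \<union> (-V))"
    unfolding \<pi>_def by (rule bij_betw_disjoint_Un[of _ _ _ "\<lambda>x. x"]) (use h2 in \<open>auto simp: bij_betw_def\<close>)
  then have bij: "bij \<pi>" by simp
  have pV: "\<pi> x \<in> V \<longleftrightarrow> x \<in> V" for x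
    using h2 unfolding \<pi>_def by (auto dest: bij_betwE)
  have pS: "\<pi> ` S' = S" using h2 h1 BS' unfolding \<pi>_def h2_def bij_betw_def
    by (smt (verit, best) image_cong subset_eq)
  have pB: "\<pi> b = b" if "b \<in> B" for b using that BS BS' unfolding \<pi>_def h2_def h1_def by auto
  have pd: "d (\<pi> x) = d x" if "x \<in> V" for x
    using that f1 f2 unfolding \<pi>_def h2_def h1_def by auto
  define \<sigma> where "\<sigma> = inv \<pi>"
  have ps: "\<pi> (\<sigma> x) = x" for x unfolding \<sigma>_def using bij by (meson bij_inv_eq_iff)
  have sp: "\<sigma> (\<pi> x) = x" for x unfolding \<sigma>_def using bij by (simp add: bij_is_inj)
  have sB: "\<sigma> b = b" if "b \<in> B" for b using pB[OF that] sp by metis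
  have injp: "inj \<pi>" using bij bij_is_inj by blast
  define \<phi> where "\<phi> = (\<lambda>(G::'a \<Rightarrow> 'a set) v. \<pi> ` G (inv \<pi> v))"
  have SS: "u \<in> S \<longleftrightarrow> \<sigma> u \<in> S'" for u using pS ps sp by (metis image_iff)
  have edge1: "(u, w) \<in> edges_in (\<phi> G) S \<Longrightarrow> (\<sigma> u, \<sigma> w) \<in> edges_in G S'" for G u w
    unfolding edges_in_def \<phi>_def \<sigma>_def[symmetric] using SS sp by auto
  have edge2: "(u, w) \<in> edges_in G S' \<Longrightarrow> (\<pi> u, \<pi> w) \<in> edges_in (\<phi> G) S" for G u w
    unfolding edges_in_def \<phi>_def \<sigma>_def[symmetric] using SS sp by auto
  have reach: "reaches_inside (\<phi> G) S B \<longleftrightarrow> reaches_inside G S' B" for G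
  proof
    assume h: "reaches_inside (\<phi> G) S B"
    show "reaches_inside G S' B" unfolding reaches_inside_def
    proof
      fix v assume v: "v \<in> S'"
      then have "\<pi> v \<in> S" using pS by blast
      then obtain b where b: "b \<in> B" "(\<pi> v, b) \<in> (edges_in (\<phi> G) S)\<^sup>*" using h unfolding reaches_inside_def by blast
      have "(\<sigma> (\<pi> v), \<sigma> b) \<in> (edges_in G S')\<^sup>*" by (rule rtrancl_transfer[OF edge1 b(2)])
      then show "\<exists>b\<in>B. (v, b) \<in> (edges_in G S')\<^sup>*" using b(1) sB sp by metis
    qed
  next
    assume h: "reaches_inside G S' B"
    show "reaches_inside (\<phi> G) S B" unfolding reaches_inside_def
    proof
      fix v assume v: "v \<in> S"
      then have "\<sigma> v \<in> S'" using SS by blast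
      then obtain b where b: "b \<in> B" "(\<sigma> v, b) \<in> (edges_in G S')\<^sup>*" using h unfolding reaches_inside_def by blast
      have "(\<pi> (\<sigma> v), \<pi> b) \<in> (edges_in (\<phi> G) S)\<^sup>*" by (rule rtrancl_transfer[OF edge2 b(2)])
      then show "\<exists>b\<in>B. (v, b) \<in> (edges_in (\<phi> G) S)\<^sup>*" using b(1) pB ps by metis
    qed
  qed
  have "measure_pmf.prob (graph_pmf V d) {G. reaches_inside G S B}
     = measure_pmf.prob (map_pmf \<phi> (graph_pmf V d)) {G. reaches_inside G S B}"
    unfolding \<phi>_def using graph_pmf_perm[OF fin bij pV pd deg] by simp
  also have "\<dots> = measure_pmf.prob (graph_pmf V d) {G. reaches_inside G S' B}"
    unfolding measure_map_pmf by (simp add: reach vimage_def)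
  finally show ?thesis by simp
qed

lemma card_by_deg:
  assumes "finite V" "S \<subseteq> V"
  shows "card S = (\<Sum>j\<in>d ` V. card {x\<in>S. d x = j})"
proof -
  have fS: "finite S" using assms finite_subset by auto
  have "(\<Sum>j\<in>d ` V. (\<Sum>x\<in>{x\<in>S. d x = j}. (1::nat))) = (\<Sum>x\<in>S. 1)"
    by (rule sum.group) (use assms fS in auto)
  then show ?thesis by simp
qed

lemma prod_by_deg:
  assumes "finite V" "S \<subseteq> V"
  shows "(\<Prod>x\<in>S. q (d x)) = (\<Prod>j\<in>d ` V. (q j :: real) ^ card {x\<in>S. d x = j})"
proof -
  have fS: "finite S" using assms finite_subset by auto
  have "(\<Prod>j\<in>d ` V. (\<Prod>x\<in>{x\<in>S. d x = j}. q (d x))) = (\<Prod>x\<in>S. q (d x))"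
    by (rule prod.group) (use assms fS in auto)
  moreover have "(\<Prod>x\<in>{x\<in>S. d x = j}. q (d x)) = q j ^ card {x\<in>S. d x = j}" for j
  proof -
    have "(\<Prod>x\<in>{x\<in>S. d x = j}. q (d x)) = (\<Prod>x\<in>{x\<in>S. d x = j}. q j)" by (rule prod.cong) auto
    then show ?thesis by simp
  qed
  ultimately show ?thesis by simp
qed

definition cntvec :: "'a set \<Rightarrow> ('a \<Rightarrow> nat) \<Rightarrow> 'a set \<Rightarrow> nat \<Rightarrow> nat" where
  "cntvec V d S = (\<lambda>j. if j \<in> d ` V then cnt_deg S d j else 0)"

lemma fiber_card:
  assumes fin: "finite V" and BV: "B \<subseteq> V" and kk: "kk \<in> tuples V d B k"
  shows "card {S. (B \<subseteq> S \<and> S \<subseteq> V \<and> card S = k) \<and> cntvec V d S = kk}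
     = (\<Prod>j\<in>d ` V. (cnt_deg V d j - cnt_deg B d j) choose (kk j - cnt_deg B d j))"
proof -
  define F where "F = {S. (B \<subseteq> S \<and> S \<subseteq> V \<and> card S = k) \<and> cntvec V d S = kk}"
  define P where "P = PiE_dflt (d ` V) {} (\<lambda>j. {X. X \<subseteq> {v\<in>V-B. d v = j} \<and> card X = kk j - cnt_deg B d j})"
  define f where "f = (\<lambda>S j. if j \<in> d ` V then {v\<in>S-B. d v = j} else {})"
  define g where "g = (\<lambda>Q. B \<union> (\<Union>j\<in>d ` V. Q j))"
  have kkD: "\<And>j. j \<in> d ` V \<Longrightarrow> cnt_deg B d j \<le> kk j \<and> kk j \<le> cnt_deg V d j"
    and kk0: "\<And>j. j \<notin> d ` V \<Longrightarrow> kk j = 0" and kks: "sum kk (d ` V) = k"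
    using kk unfolding tuples_def by auto
  have fB: "finite B" using fin BV finite_subset by auto
  have cntS: "card {x\<in>S. d x = j} = card {v\<in>S-B. d v = j} + cnt_deg B d j" if "B \<subseteq> S" "S \<subseteq> V" for S j
  proof -
    have "{x\<in>S. d x = j} = {v\<in>S-B. d v = j} \<union> {x\<in>B. d x = j}" using that by auto
    moreover have "finite {v\<in>S-B. d v = j}" using fin that by (auto intro: finite_subset)
    moreover have "finite {x\<in>B. d x = j}" using fB by auto
    ultimately show ?thesis unfolding cnt_deg_def by (subst card_Un_disjoint[symmetric]) auto
  qed
  have bij: "bij_betw f F P"
  proof (rule bij_betw_byWitness[where f'=g])
    show "\<forall>S\<in>F. g (f S) = S"
    proof
      fix S assume "S \<in> F"
      then have "B \<subseteq> S" "S \<subseteq> V" unfolding F_def by auto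
      have "(\<Union>j\<in>d ` V. f S j) = S - B"
      proof
        show "(\<Union>j\<in>d ` V. f S j) \<subseteq> S - B" unfolding f_def by auto
        show "S - B \<subseteq> (\<Union>j\<in>d ` V. f S j)"
        proof
          fix v assume v: "v \<in> S - B"
          then have "v \<in> f S (d v)" "d v \<in> d ` V" using \<open>S \<subseteq> V\<close> unfolding f_def by auto
          then show "v \<in> (\<Union>j\<in>d ` V. f S j)" by blast
        qed
      qed
      then show "g (f S) = S" unfolding g_def using \<open>B \<subseteq> S\<close> by blast
    qed
    show "f ` F \<subseteq> P"
    proof
      fix Q assume "Q \<in> f ` F"
      then obtain S where S: "S \<in> F" "Q = f S" by blast
      then have S1: "B \<subseteq> S" "S \<subseteq> V" "cntvec V d S = kk" unfolding F_def by auto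
      have c: "card {v\<in>S-B. d v = j} = kk j - cnt_deg B d j" if "j \<in> d ` V" for j
      proof -
        have "cnt_deg S d j = kk j" using S1(3) that unfolding cntvec_def by meson
        then show ?thesis using cntS[OF S1(1,2), of j] unfolding cnt_deg_def by simp
      qed
      have h1: "Q j \<subseteq> {v \<in> V - B. d v = j} \<and> card (Q j) = kk j - cnt_deg B d j" if j: "j \<in> d ` V" for j
        using c[OF j] j S1(2) unfolding S(2) f_def by auto
      have h2: "Q j = {}" if "j \<notin> d ` V" for j
        using that unfolding S(2) f_def by simp
      show "Q \<in> P" unfolding P_def PiE_dflt_def using h1 h2 by simp
    qed
    show "\<forall>Q\<in>P. f (g Q) = Q"
    proof
      fix Q assume Q: "Q \<in> P"
      show "f (g Q) = Q"
      proof
        fix j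
        show "f (g Q) j = Q j"
        proof (cases "j \<in> d ` V")
          case True
          have "{v \<in> g Q - B. d v = j} = Q j"
          proof
            show "Q j \<subseteq> {v \<in> g Q - B. d v = j}" using Q True unfolding P_def PiE_dflt_def g_def by auto
            show "{v \<in> g Q - B. d v = j} \<subseteq> Q j"
            proof
              fix v assume v: "v \<in> {v \<in> g Q - B. d v = j}"
              then obtain i where i: "i \<in> d ` V" "v \<in> Q i" unfolding g_def by auto
              then have "d v = i" using Q unfolding P_def PiE_dflt_def by auto
              then show "v \<in> Q j" using v i by auto
            qed
          qed
          then show ?thesis using True unfolding f_def by simp
        next
          case False
          then show ?thesis using Q unfolding f_def P_def PiE_dflt_def by auto
        qed
      qed
    qed
    show "g ` P \<subseteq> F"
    proof
      fix S assume "S \<in> g ` P"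
      then obtain Q where Q: "Q \<in> P" "S = g Q" by blast
      have BS: "B \<subseteq> S" using Q unfolding g_def by auto
      have SV: "S \<subseteq> V" using Q BV unfolding g_def P_def PiE_dflt_def by auto
      have fQ: "f S = Q" using \<open>\<forall>Q\<in>P. f (g Q) = Q\<close> Q by simp
      have cS: "cnt_deg S d j = kk j" if "j \<in> d ` V" for j
      proof -
        have "{v\<in>S-B. d v = j} = Q j" using fQ that unfolding f_def by meson
        then have "card {v\<in>S-B. d v = j} = kk j - cnt_deg B d j" using Q(1) that unfolding P_def PiE_dflt_def by auto
        then show ?thesis using cntS[OF BS SV, of j] kkD[OF that] unfolding cnt_deg_def by simp
      qed
      have cv: "cntvec V d S = kk" unfolding cntvec_def using cS kk0 by auto
      have "card S = (\<Sum>j\<in>d ` V. card {x\<in>S. d x = j})" by (rule card_by_deg[OF fin SV])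
      also have "\<dots> = sum kk (d ` V)" using cS unfolding cnt_deg_def by simp
      finally have "card S = k" using kks by simp
      then show "S \<in> F" unfolding F_def using BS SV cv by simp
    qed
  qed
  have "card F = card P" using bij by (rule bij_betw_same_card)
  also have "\<dots> = (\<Prod>j\<in>d ` V. card {X. X \<subseteq> {v\<in>V-B. d v = j} \<and> card X = kk j - cnt_deg B d j})"
    unfolding P_def by (rule card_PiE_dflt) (auto simp: fin intro: finite_subset[of _ "Pow V"])
  also have "\<dots> = (\<Prod>j\<in>d ` V. (cnt_deg V d j - cnt_deg B d j) choose (kk j - cnt_deg B d j))"
  proof (rule prod.cong[OF refl])
    fix j assume j: "j \<in> d ` V"
    have "card {v\<in>V-B. d v = j} = cnt_deg V d j - cnt_deg B d j"
      using cntS[OF BV order.refl, of j] unfolding cnt_deg_def by simp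
    moreover have "finite {v\<in>V-B. d v = j}" using fin by auto
    ultimately show "card {X. X \<subseteq> {v\<in>V-B. d v = j} \<and> card X = kk j - cnt_deg B d j}
       = (cnt_deg V d j - cnt_deg B d j) choose (kk j - cnt_deg B d j)" by (simp add: n_subsets)
  qed
  finally show ?thesis unfolding F_def .
qed

lemma tuples_finite:
  assumes "finite V"
  shows "finite (tuples V d B k)"
proof (rule finite_subset)
  show "tuples V d B k \<subseteq> PiE_dflt (d ` V) 0 (\<lambda>_. {0..card V})"
  proof
    fix kk assume kk: "kk \<in> tuples V d B k"
    have "kk j \<le> card V" if "j \<in> d ` V" for j
    proof -
      have "kk j \<le> cnt_deg V d j" using kk that unfolding tuples_def by auto
      also have "\<dots> \<le> card V" unfolding cnt_deg_def using assms by (intro card_mono) auto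
      finally show ?thesis .
    qed
    then show "kk \<in> PiE_dflt (d ` V) 0 (\<lambda>_. {0..card V})"
      using kk unfolding tuples_def PiE_dflt_def by auto
  qed
  show "finite (PiE_dflt (d ` V) 0 (\<lambda>_. {0..card V}))" using assms by auto
qed

lemma tuples_card:
  assumes fin: "finite V"
  shows "card (tuples V d B k) \<le> card V ^ card (d ` V)"
proof (cases "d ` V = {}")
  case True
  then have "tuples V d B k \<subseteq> {\<lambda>_. 0}" unfolding tuples_def by auto
  then have "card (tuples V d B k) \<le> card {\<lambda>_::nat. 0::nat}" by (intro card_mono) auto
  then show ?thesis using True by simp
next
  case False
  then obtain j0 where j0: "j0 \<in> d ` V" by blast
  define h where "h = (\<lambda>kk::nat\<Rightarrow>nat. kk(j0 := 0))"
  define T where "T = PiE_dflt (d ` V) 0 (\<lambda>j. if j = j0 then {0} else {0..cnt_deg V d j})"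
  have inj: "inj_on h (tuples V d B k)"
  proof (rule inj_onI)
    fix kk kk' assume kk: "kk \<in> tuples V d B k" and kk': "kk' \<in> tuples V d B k" and eq: "h kk = h kk'"
    have o: "kk j = kk' j" if "j \<noteq> j0" for j using eq that unfolding h_def by (metis fun_upd_other)
    have "sum kk (d ` V) = kk j0 + sum kk (d ` V - {j0})" "sum kk' (d ` V) = kk' j0 + sum kk' (d ` V - {j0})"
      using j0 fin by (simp_all add: sum.remove)
    moreover have "sum kk (d ` V - {j0}) = sum kk' (d ` V - {j0})" using o by (intro sum.cong) auto
    moreover have "sum kk (d ` V) = k" "sum kk' (d ` V) = k" using kk kk' unfolding tuples_def by auto
    ultimately have "kk j0 = kk' j0" by simp
    then show "kk = kk'" using o by (metis ext)
  qed
  have sub: "h ` tuples V d B k \<subseteq> T"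
  proof
    fix x assume "x \<in> h ` tuples V d B k"
    then obtain kk where kk: "kk \<in> tuples V d B k" "x = h kk" by blast
    then show "x \<in> T" unfolding T_def PiE_dflt_def h_def tuples_def by auto
  qed
  have fT: "finite T" unfolding T_def using fin by auto
  have "card (tuples V d B k) = card (h ` tuples V d B k)" using inj by (simp add: card_image)
  also have "\<dots> \<le> card T" using sub fT by (rule card_mono[rotated])
  also have "card T = (\<Prod>j\<in>d ` V. card (if j = j0 then {0} else {0..cnt_deg V d j}))"
    unfolding T_def using fin by (intro card_PiE_dflt) auto
  also have "\<dots> \<le> (\<Prod>j\<in>d ` V. card V)"
  proof (rule prod_mono, rule conjI)
    fix j assume j: "j \<in> d ` V"
    have n1: "1 \<le> card V" using j fin by (metis One_nat_def Suc_leI card_gt_0_iff empty_iff image_empty)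
    show "card (if j = j0 then {0} else {0..cnt_deg V d j}) \<le> card V"
    proof (cases "j = j0")
      case True then show ?thesis using n1 by simp
    next
      case False
      have "cnt_deg V d j + cnt_deg V d j0 = card ({x\<in>V. d x = j} \<union> {x\<in>V. d x = j0})"
        unfolding cnt_deg_def using False fin by (subst card_Un_disjoint) auto
      also have "\<dots> \<le> card V" using fin by (intro card_mono) auto
      finally have a: "cnt_deg V d j + cnt_deg V d j0 \<le> card V" .
      have "cnt_deg V d j0 > 0" unfolding cnt_deg_def using j0 fin by (subst card_gt_0_iff) auto
      then show ?thesis using False a by simp
    qed
  qed simp
  also have "\<dots> = card V ^ card (d ` V)" by simp
  finally show ?thesis .
qed

lemma prob_cong_support:
  assumes "\<And>x. x \<in> set_pmf M \<Longrightarrow> x \<in> A \<longleftrightarrow> x \<in> C"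
  shows "measure_pmf.prob M A = measure_pmf.prob M C"
proof -
  have "A \<inter> set_pmf M = C \<inter> set_pmf M" using assms by blast
  then show ?thesis by (metis measure_Int_set_pmf)
qed

lemma B_sub_rev_reach:
  assumes "B \<subseteq> V" shows "B \<subseteq> rev_reach G V B"
  using assms unfolding rev_reach_def by auto

lemma cntvec_tuples:
  assumes "finite V" "B \<subseteq> S" "S \<subseteq> V" "card S = k"
  shows "cntvec V d S \<in> tuples V d B k"
proof -
  have "cnt_deg B d j \<le> cnt_deg S d j \<and> cnt_deg S d j \<le> cnt_deg V d j" for j
    unfolding cnt_deg_def using assms by (auto intro!: card_mono intro: finite_subset)
  moreover have "sum (cntvec V d S) (d ` V) = k"
  proof -
    have "sum (cntvec V d S) (d ` V) = (\<Sum>j\<in>d ` V. card {x\<in>S. d x = j})"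
      unfolding cntvec_def cnt_deg_def by (rule sum.cong) auto
    also have "\<dots> = card S" using card_by_deg[OF assms(1,3), of d] by simp
    finally show ?thesis using assms(4) by simp
  qed
  ultimately show ?thesis unfolding tuples_def cntvec_def by auto
qed

theorem lemma3:
  fixes V B :: "'a set" and d :: "'a \<Rightarrow> nat" and k :: nat
  assumes "finite V" and "B \<subseteq> V"
    and "\<forall>v\<in>V. 1 \<le> d v \<and> d v \<le> card V"
    and "card B \<le> k" and "k \<le> card V"
  shows "measure_pmf.prob (graph_pmf V d) {G. card (rev_reach G V B) = k} = alpha V d B k
       \<and> alpha V d B k \<le> real (card V) ^ card (d ` V) * Max (a_coef V d B ` tuples V d B k)"
proof -
  note fin = assms(1) and BV = assms(2)
  have deg: "\<forall>v\<in>V. d v \<le> card V" using assms(3) by auto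
  define M where "M = graph_pmf V d"
  define Sk where "Sk = {S. B \<subseteq> S \<and> S \<subseteq> V \<and> card S = k}"
  define q where "q = (\<lambda>j. real (card V - k choose j) / real (card V choose j))"
  define fval where "fval = (\<lambda>S. measure_pmf.prob M {G. reaches_inside G S B} * (\<Prod>w\<in>V-S. q (d w)))"
  have fSk: "finite Sk" unfolding Sk_def by (rule finite_subset[of _ "Pow V"]) (auto simp: fin)
  have fT: "finite (tuples V d B k)" by (rule tuples_finite[OF fin])
  have s1: "measure_pmf.prob M {G. card (rev_reach G V B) = k} = (\<Sum>S\<in>Sk. measure_pmf.prob M {G. rev_reach G V B = S})"
  proof -
    have "{G. card (rev_reach G V B) = k} = (\<Union>S\<in>Sk. {G. rev_reach G V B = S})"
      unfolding Sk_def using B_sub_rev_reach[OF BV] by (auto simp: rev_reach_def)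
    moreover have "measure_pmf.prob M (\<Union>S\<in>Sk. {G. rev_reach G V B = S}) = (\<Sum>S\<in>Sk. measure_pmf.prob M {G. rev_reach G V B = S})"
      by (rule measure_pmf.finite_measure_finite_Union) (auto simp: fSk disjoint_family_on_def)
    ultimately show ?thesis by simp
  qed
  have s2: "measure_pmf.prob M {G. rev_reach G V B = S} = fval S" if S: "S \<in> Sk" for S
  proof -
    have S1: "B \<subseteq> S" "S \<subseteq> V" "card S = k" using S unfolding Sk_def by auto
    have "measure_pmf.prob M {G. rev_reach G V B = S} = measure_pmf.prob M {G. reaches_inside G S B \<and> (\<forall>w\<in>V-S. G w \<inter> S = {})}"
    proof (rule prob_cong_support)
      fix G assume "G \<in> set_pmf M"
      then have "\<And>v. v \<in> V \<Longrightarrow> G v \<subseteq> V" using graph_support(2)[OF fin deg] unfolding M_def by blast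
      then show "G \<in> {G. rev_reach G V B = S} \<longleftrightarrow> G \<in> {G. reaches_inside G S B \<and> (\<forall>w\<in>V-S. G w \<inter> S = {})}"
        using rev_reach_char[of V G B S] S1 by simp
    qed
    also have "\<dots> = fval S"
      unfolding M_def fval_def q_def using factor[OF fin deg S1(2), of B] S1 fin
      by (simp add: card_Diff_subset finite_subset)
    finally show ?thesis .
  qed
  have s3: "(\<Sum>S\<in>Sk. fval S) = (\<Sum>kk\<in>tuples V d B k. \<Sum>S\<in>{S\<in>Sk. cntvec V d S = kk}. fval S)"
    by (rule sum.group[symmetric]) (use fSk fT cntvec_tuples[OF fin] in \<open>auto simp: Sk_def\<close>)
  have s4: "(\<Sum>S\<in>{S\<in>Sk. cntvec V d S = kk}. fval S) = a_coef V d B kk" if kk: "kk \<in> tuples V d B k" for kk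
  proof -
    have kks: "sum kk (d ` V) = k" using kk unfolding tuples_def by auto
    define c where "c = R_prob V d B kk * (\<Prod>j\<in>d ` V. q j ^ (cnt_deg V d j - kk j))"
    have val: "fval S = c" if S: "S \<in> {S\<in>Sk. cntvec V d S = kk}" for S
    proof -
      have S1: "B \<subseteq> S" "S \<subseteq> V" "card S = k" "cntvec V d S = kk" using S unfolding Sk_def by auto
      have cS: "cnt_deg S d j = kk j" if "j \<in> d ` V" for j using S1(4) that unfolding cntvec_def by meson
      have ex: "\<exists>S. B \<subseteq> S \<and> S \<subseteq> V \<and> (\<forall>j\<in>d ` V. cnt_deg S d j = kk j)" using S1 cS by blast
      define S0 where "S0 = (SOME S. B \<subseteq> S \<and> S \<subseteq> V \<and> (\<forall>j\<in>d ` V. cnt_deg S d j = kk j))"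
      have S0: "B \<subseteq> S0" "S0 \<subseteq> V" "\<forall>j\<in>d ` V. cnt_deg S0 d j = kk j"
        using someI_ex[OF ex] unfolding S0_def by auto
      have R: "R_prob V d B kk = measure_pmf.prob M {G. reaches_inside G S B}"
      proof -
        have "R_prob V d B kk = measure_pmf.prob M {G. reaches_inside G S0 B}"
          unfolding R_prob_def Let_def S0_def[symmetric] M_def ..
        also have "\<dots> = measure_pmf.prob M {G. reaches_inside G S B}"
          unfolding M_def
        proof (rule R_sym[OF fin deg S1(1,2) S0(1,2)], rule allI)
          fix j show "card {x\<in>S. d x = j} = card {x\<in>S0. d x = j}"
            by (rule cnt_all[OF S1(2) S0(2)]) (use cS S0(3) in auto)
        qed
        finally show ?thesis .
      qed
      have P: "(\<Prod>w\<in>V-S. q (d w)) = (\<Prod>j\<in>d ` V. q j ^ (cnt_deg V d j - kk j))"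
      proof -
        have "(\<Prod>w\<in>V-S. q (d w)) = (\<Prod>j\<in>d ` V. q j ^ card {x\<in>V-S. d x = j})"
          by (rule prod_by_deg[OF fin]) auto
        also have "\<dots> = (\<Prod>j\<in>d ` V. q j ^ (cnt_deg V d j - kk j))"
        proof (rule prod.cong[OF refl])
          fix j assume j: "j \<in> d ` V"
          have "{x\<in>V-S. d x = j} = {x\<in>V. d x = j} - {x\<in>S. d x = j}" by auto
          moreover have "{x\<in>S. d x = j} \<subseteq> {x\<in>V. d x = j}" using S1(2) by auto
          moreover have "finite {x\<in>S. d x = j}" using fin S1(2) by (auto intro: finite_subset)
          ultimately have "card {x\<in>V-S. d x = j} = cnt_deg V d j - cnt_deg S d j"
            unfolding cnt_deg_def by (simp add: card_Diff_subset)
          then show "q j ^ card {x\<in>V-S. d x = j} = q j ^ (cnt_deg V d j - kk j)" using cS[OF j] by simp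
        qed
        finally show ?thesis .
      qed
      show ?thesis unfolding fval_def c_def R P ..
    qed
    have "(\<Sum>S\<in>{S\<in>Sk. cntvec V d S = kk}. fval S) = (\<Sum>S\<in>{S\<in>Sk. cntvec V d S = kk}. c)"
      by (rule sum.cong[OF refl]) (rule val)
    also have "\<dots> = real (card {S\<in>Sk. cntvec V d S = kk}) * c" by simp
    also have "card {S\<in>Sk. cntvec V d S = kk} = (\<Prod>j\<in>d ` V. (cnt_deg V d j - cnt_deg B d j) choose (kk j - cnt_deg B d j))"
      unfolding Sk_def using fiber_card[OF fin BV kk] by simp
    also have "real (\<Prod>j\<in>d ` V. (cnt_deg V d j - cnt_deg B d j) choose (kk j - cnt_deg B d j)) * c = a_coef V d B kk"
    proof -
      have "(\<Prod>j\<in>d ` V. real ((cnt_deg V d j - cnt_deg B d j) choose (kk j - cnt_deg B d j))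
            * (if cnt_deg V d j = kk j then 1
               else (real ((card V - sum kk (d ` V)) choose j) / real (card V choose j)) ^ (cnt_deg V d j - kk j)))
          = (\<Prod>j\<in>d ` V. real ((cnt_deg V d j - cnt_deg B d j) choose (kk j - cnt_deg B d j)) * q j ^ (cnt_deg V d j - kk j))"
        by (rule prod.cong[OF refl]) (simp add: q_def kks)
      then have "a_coef V d B kk = (\<Prod>j\<in>d ` V. real ((cnt_deg V d j - cnt_deg B d j) choose (kk j - cnt_deg B d j)) * q j ^ (cnt_deg V d j - kk j)) * R_prob V d B kk"
        unfolding a_coef_def Let_def by simp
      then show ?thesis unfolding c_def by (simp add: prod.distrib mult_ac)
    qed
    finally show ?thesis .
  qed
  have part1: "measure_pmf.prob M {G. card (rev_reach G V B) = k} = alpha V d B k"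
    unfolding s1 alpha_def using s2 s3 s4 by simp
  obtain T where T: "T \<subseteq> V - B" "card T = k - card B"
  proof -
    have "card (V - B) = card V - card B" using fin BV by (simp add: card_Diff_subset finite_subset)
    then have "k - card B \<le> card (V - B)" using assms(5) by simp
    then show ?thesis using that obtain_subset_with_card_n by metis
  qed
  define S where "S = B \<union> T"
  have fB: "finite B" "finite T" using fin BV T(1) by (auto intro: finite_subset)
  have "card (B \<union> T) = card B + card T" using fB T(1) by (intro card_Un_disjoint) auto
  then have S1: "B \<subseteq> S" "S \<subseteq> V" "card S = k" unfolding S_def using T BV assms(4) by auto
  have ne: "cntvec V d S \<in> tuples V d B k" by (rule cntvec_tuples[OF fin S1])
  have nonneg: "a_coef V d B kk \<ge> 0" for kk
    unfolding a_coef_def Let_def R_prob_def by (intro mult_nonneg_nonneg prod_nonneg) auto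
  have fI: "finite (a_coef V d B ` tuples V d B k)" using fT by simp
  have mx: "a_coef V d B kk \<le> Max (a_coef V d B ` tuples V d B k)" if "kk \<in> tuples V d B k" for kk
    using fI that by (intro Max_ge) auto
  have M0: "0 \<le> Max (a_coef V d B ` tuples V d B k)" using mx[OF ne] nonneg[of "cntvec V d S"] by linarith
  have "alpha V d B k \<le> real (card (tuples V d B k)) * Max (a_coef V d B ` tuples V d B k)"
    unfolding alpha_def using mx by (intro sum_bounded_above) auto
  also have "\<dots> \<le> real (card V) ^ card (d ` V) * Max (a_coef V d B ` tuples V d B k)"
  proof (rule mult_right_mono[OF _ M0])
    have "card (tuples V d B k) \<le> card V ^ card (d ` V)" by (rule tuples_card[OF fin])
    then show "real (card (tuples V d B k)) \<le> real (card V) ^ card (d ` V)"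
      by (metis of_nat_le_iff of_nat_power)
  qed
  finally show ?thesis using part1 unfolding M_def by simp
qed

end
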